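(* Let $Q$ be a commutative noetherian local ring and let $f,g\in Q$ be regular elements of $Q$ such that $(f)\cap(g)=(fg)$. Set $A=Q/(fg)$ and let $x,y\in A$ be the cosets of $f,g$. If $\operatorname{depth} Q>2$, then there exist elements of $A$ that are regular on the $A$-module $A/(x,y)$.
   Context: An element $a\in A$ is regular on a finitely generated $A$-module $M$ if $a$ is a non-unit and multiplication by $a$ on $M$ is injective. *)

theory Defs
  imports "HOL-Algebra.Algebra" "HOL-Library.Extended_Nat"
begin

definition local_ring :: "('a, 'b) ring_scheme \<Rightarrow> bool" where
  "local_ring R \<longleftrightarrow> cring R \<and> (\<exists>!m. maximalideal m R)"

definition max_ideal :: "('a, 'b) ring_scheme \<Rightarrow> 'a set" where
  "max_ideal R = (THE m. maximalideal m R)"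

text \<open>Element a of R is regular on the (cyclic, finitely generated) R-module R/I:
  a is a non-unit of R and multiplication by a on R/I is injective.
  (Regular on R itself corresponds to I = {0}.)\<close>
definition regular_on_quot :: "('a, 'b) ring_scheme \<Rightarrow> 'a set \<Rightarrow> 'a \<Rightarrow> bool" where
  "regular_on_quot R I a \<longleftrightarrow> a \<in> carrier R \<and> a \<notin> Units R \<and>
     (\<forall>b \<in> carrier R. a \<otimes>\<^bsub>R\<^esub> b \<in> I \<longrightarrow> b \<in> I)"

definition regular_sequence :: "('a, 'b) ring_scheme \<Rightarrow> 'a set \<Rightarrow> 'a list \<Rightarrow> bool" where
  "regular_sequence R m xs \<longleftrightarrow> set xs \<subseteq> m \<and>
     (\<forall>i < length xs. \<forall>b \<in> carrier R.
        xs ! i \<otimes>\<^bsub>R\<^esub> b \<in> Idl\<^bsub>R\<^esub> (set (take i xs)) \<longrightarrow> b \<in> Idl\<^bsub>R\<^esub> (set (take i xs))) \<and>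
     Idl\<^bsub>R\<^esub> (set xs) \<noteq> carrier R"

definition depth :: "('a, 'b) ring_scheme \<Rightarrow> enat" where
  "depth R = Sup {enat (length xs) | xs. regular_sequence R (max_ideal R) xs}"

end

theory Submission
  imports Defs
begin


definition plusI :: "('a,'b) ring_scheme \<Rightarrow> 'a set \<Rightarrow> 'a \<Rightarrow> 'a set" where
  "plusI R I a = {i \<oplus>\<^bsub>R\<^esub> r \<otimes>\<^bsub>R\<^esub> a | i r. i \<in> I \<and> r \<in> carrier R}"
definition ann :: "('a,'b) ring_scheme \<Rightarrow> 'a set \<Rightarrow> 'a \<Rightarrow> 'a set" where
  "ann R I w = {r \<in> carrier R. r \<otimes>\<^bsub>R\<^esub> w \<in> I}"
definition regm :: "('a,'b) ring_scheme \<Rightarrow> 'a set \<Rightarrow> 'a \<Rightarrow> bool" where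
  "regm R I a = (\<forall>r \<in> carrier R. a \<otimes>\<^bsub>R\<^esub> r \<in> I \<longrightarrow> r \<in> I)"
definition soc :: "('a,'b) ring_scheme \<Rightarrow> 'a set \<Rightarrow> 'a set \<Rightarrow> bool" where
  "soc R I M = (\<exists>w \<in> carrier R - I. \<forall>t \<in> M. t \<otimes>\<^bsub>R\<^esub> w \<in> I)"

context cring
begin

lemma plusI_eq: assumes "ideal I R" "a \<in> carrier R" shows "plusI R I a = set_add R I (PIdl a)"
  unfolding plusI_def set_add_def' cgenideal_def by auto

lemma plusI_ideal: assumes "ideal I R" "a \<in> carrier R" shows "ideal (plusI R I a) R"
  using plusI_eq[OF assms] add_ideals[OF assms(1) cgenideal_ideal[OF assms(2)]] by simp

lemma plusI_sub: assumes "ideal I R" "a \<in> carrier R" shows "I \<subseteq> plusI R I a"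
proof
  fix x assume "x \<in> I"
  then have "x = x \<oplus> \<zero> \<otimes> a" using assms ideal.Icarr by fastforce
  then show "x \<in> plusI R I a" unfolding plusI_def using \<open>x \<in> I\<close> by blast
qed

lemma plusI_gen: assumes "ideal I R" "a \<in> carrier R" shows "a \<in> plusI R I a"
proof -
  have "a = \<zero> \<oplus> \<one> \<otimes> a" using assms by simp
  then show ?thesis unfolding plusI_def using assms additive_subgroup.zero_closed[OF ideal.axioms(1)] by blast
qed

lemma plusI_min: assumes "ideal I R" "a \<in> carrier R" "ideal K R" "I \<subseteq> K" "a \<in> K"
  shows "plusI R I a \<subseteq> K"
  unfolding plusI_def using assms
  by (auto intro!: additive_subgroup.a_closed[OF ideal.axioms(1)[OF assms(3)]] ideal.I_l_closed)

lemma plusI_Idl: assumes "ideal I R" "a \<in> carrier R" "S \<subseteq> carrier R" "I = Idl S"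
  shows "plusI R I a = Idl (insert a S)"
proof
  have "ideal (Idl (insert a S)) R" using assms genideal_ideal by auto
  moreover have "I \<subseteq> Idl (insert a S)" using assms
    by (metis genideal_minimal genideal_ideal genideal_self insert_subset subset_insertI subset_trans calculation)
  moreover have "a \<in> Idl (insert a S)" using assms genideal_self[of "insert a S"] by auto
  ultimately show "plusI R I a \<subseteq> Idl (insert a S)" using plusI_min assms by auto
  show "Idl (insert a S) \<subseteq> plusI R I a"
  proof (rule genideal_minimal)
    show "ideal (plusI R I a) R" using assms plusI_ideal by auto
    have "S \<subseteq> I" using assms genideal_self by auto
    then show "insert a S \<subseteq> plusI R I a" using assms plusI_sub plusI_gen by blast
  qed
qed

lemma ann_ideal: assumes "ideal I R" "w \<in> carrier R" shows "ideal (ann R I w) R"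
proof -
  have "ann R I w = {r \<in> carrier R. (\<lambda>x. x \<otimes> w) r \<in> I}" unfolding ann_def by simp
  moreover have "ideal \<dots> R"
  proof (rule idealI)
    show "ring R" by (rule ring_axioms)
    show "subgroup {r \<in> carrier R. r \<otimes> w \<in> I} (add_monoid R)"
    proof
      show "{r \<in> carrier R. r \<otimes> w \<in> I} \<subseteq> carrier (add_monoid R)" by auto
      show "\<one>\<^bsub>add_monoid R\<^esub> \<in> {r \<in> carrier R. r \<otimes> w \<in> I}"
        using assms additive_subgroup.zero_closed[OF ideal.axioms(1)] by auto
      fix x y assume x: "x \<in> {r \<in> carrier R. r \<otimes> w \<in> I}" and y: "y \<in> {r \<in> carrier R. r \<otimes> w \<in> I}"
      then show "x \<otimes>\<^bsub>add_monoid R\<^esub> y \<in> {r \<in> carrier R. r \<otimes> w \<in> I}"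
        using assms additive_subgroup.a_closed[OF ideal.axioms(1)[OF assms(1)]] by (auto simp: l_distr)
    next
      fix x assume x: "x \<in> {r \<in> carrier R. r \<otimes> w \<in> I}"
      then show "inv\<^bsub>add_monoid R\<^esub> x \<in> {r \<in> carrier R. r \<otimes> w \<in> I}"
        using assms additive_subgroup.a_inv_closed[OF ideal.axioms(1)[OF assms(1)]]
        by (auto simp: a_inv_def[symmetric] l_minus)
    qed
    fix a x assume "a \<in> {r \<in> carrier R. r \<otimes> w \<in> I}" "x \<in> carrier R"
    then have a: "a \<in> carrier R" "a \<otimes> w \<in> I" and x: "x \<in> carrier R" by auto
    have "x \<otimes> (a \<otimes> w) \<in> I" using ideal.I_l_closed[OF assms(1) a(2) x] .
    moreover have "x \<otimes> a \<otimes> w = x \<otimes> (a \<otimes> w)" "a \<otimes> x \<otimes> w = x \<otimes> (a \<otimes> w)"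
      using a x assms(2) by (simp_all add: m_assoc m_lcomm)
    ultimately show "x \<otimes> a \<in> {r \<in> carrier R. r \<otimes> w \<in> I}" "a \<otimes> x \<in> {r \<in> carrier R. r \<otimes> w \<in> I}"
      using a x by auto
  qed
  ultimately show ?thesis by simp
qed

end


lemma noeth_max:
  assumes N: "noetherian_ring R" and ne: "S \<noteq> {}" and id: "\<forall>I\<in>S. ideal I R"
  shows "\<exists>Mx\<in>S. \<forall>Y\<in>S. Mx \<subseteq> Y \<longrightarrow> Y = Mx"
proof -
  obtain C where C: "subset.maxchain S C" using subset.Hausdorff by blast
  hence ch: "subset.chain S C" by (simp add: pred_on.maxchain_def)
  have Cne: "C \<noteq> {}"
  proof
    assume "C = {}"
    then obtain s where "s \<in> S" "C \<subset> {s}" using ne by blast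
    moreover have "subset.chain S {s}" using \<open>s \<in> S\<close> by (simp add: pred_on.chain_def)
    ultimately show False using C by (auto simp: pred_on.maxchain_def)
  qed
  have "subset.chain {I. ideal I R} C" using ch id by (auto simp: pred_on.chain_def)
  hence UC: "\<Union>C \<in> C" using noetherian_ring.ideal_chain_is_trivial[OF N Cne] by blast
  hence MS: "\<Union>C \<in> S" using ch by (auto simp: pred_on.chain_def)
  show ?thesis
  proof (intro bexI[OF _ MS] ballI impI)
    fix Y assume Y: "Y \<in> S" "\<Union>C \<subseteq> Y"
    show "Y = \<Union>C"
    proof (rule ccontr)
      assume ne2: "Y \<noteq> \<Union>C"
      hence XC: "Y \<notin> C" using Y by blast
      have "subset.chain S (insert Y C)"
        using ch Y ne2 unfolding pred_on.chain_def by auto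
      moreover have "C \<subset> insert Y C" using XC by blast
      ultimately show False using C by (auto simp: pred_on.maxchain_def)
    qed
  qed
qed



definition Ass :: "('a,'b) ring_scheme \<Rightarrow> 'a set \<Rightarrow> 'a set set" where
  "Ass R J = {P. primeideal P R \<and> (\<exists>w \<in> carrier R - J. P = ann R J w)}"

context cring
begin

lemma ideal_add_iff: assumes I: "ideal I R" and a: "a \<in> I" and b: "b \<in> carrier R"
  shows "(a \<oplus> b \<in> I) = (b \<in> I)"
proof -
  interpret ideal I R by (rule I)
  have ac: "a \<in> carrier R" using a by (rule Icarr)
  have "\<ominus> a \<in> I" using a by (rule a_inv_closed)
  have e: "\<ominus> a \<oplus> (a \<oplus> b) = b" using ac b by algebra
  show ?thesis
  proof
    assume "a \<oplus> b \<in> I"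
    hence "\<ominus> a \<oplus> (a \<oplus> b) \<in> I" using a_closed[OF \<open>\<ominus> a \<in> I\<close>] by blast
    thus "b \<in> I" using e by simp
  next
    assume "b \<in> I" thus "a \<oplus> b \<in> I" using a_closed[OF a] by blast
  qed
qed

lemma max_ann:
  assumes N: "noetherian_ring R" and I: "ideal I R" and b: "b \<in> carrier R" "b \<notin> I"
  shows "\<exists>w \<in> carrier R - I. ann R I b \<subseteq> ann R I w \<and> primeideal (ann R I w) R"
proof -
  define S where "S = {ann R I w | w. w \<in> carrier R - I \<and> ann R I b \<subseteq> ann R I w}"
  have "S \<noteq> {}" using b unfolding S_def by blast
  moreover have "\<forall>J\<in>S. ideal J R" unfolding S_def using ann_ideal[OF I] by auto
  ultimately obtain Mx where Mx: "Mx \<in> S" "\<forall>Y\<in>S. Mx \<subseteq> Y \<longrightarrow> Y = Mx"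
    using noeth_max[OF N] by blast
  then obtain w where w: "w \<in> carrier R" "w \<notin> I" "ann R I b \<subseteq> ann R I w" "Mx = ann R I w"
    unfolding S_def by blast
  have nc: "carrier R \<noteq> ann R I w"
  proof
    assume "carrier R = ann R I w"
    hence "\<one> \<otimes> w \<in> I" unfolding ann_def by auto
    thus False using w by simp
  qed
  have pr0: "y \<in> ann R I w"
    if xy: "x \<in> carrier R" "y \<in> carrier R" "x \<otimes> y \<in> ann R I w" and "x \<notin> ann R I w" for x y
  proof -
    have xw: "x \<otimes> w \<notin> I" using xy that(4) unfolding ann_def by auto
    have sub: "ann R I w \<subseteq> ann R I (x \<otimes> w)"
    proof
      fix r assume "r \<in> ann R I w"
      hence r: "r \<in> carrier R" "r \<otimes> w \<in> I" unfolding ann_def by auto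
      have "x \<otimes> (r \<otimes> w) \<in> I" using ideal.I_l_closed[OF I r(2) xy(1)] .
      moreover have "r \<otimes> (x \<otimes> w) = x \<otimes> (r \<otimes> w)" using r xy w by algebra
      ultimately show "r \<in> ann R I (x \<otimes> w)" using r xy w unfolding ann_def by auto
    qed
    have xwc: "x \<otimes> w \<in> carrier R" using xy w by simp
    have "ann R I (x \<otimes> w) \<in> S" using w xw xwc sub unfolding S_def by blast
    hence eq: "ann R I (x \<otimes> w) = ann R I w" using Mx w sub by auto
    have "(x \<otimes> y) \<otimes> w \<in> I" using xy unfolding ann_def by auto
    moreover have "(x \<otimes> y) \<otimes> w = y \<otimes> (x \<otimes> w)" using xy w by algebra
    ultimately have "y \<in> ann R I (x \<otimes> w)" using xy unfolding ann_def by auto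
    thus "y \<in> ann R I w" using eq by simp
  qed
  have pr: "x \<in> ann R I w \<or> y \<in> ann R I w"
    if "x \<in> carrier R" "y \<in> carrier R" "x \<otimes> y \<in> ann R I w" for x y
    using pr0[OF that] by blast
  have "primeideal (ann R I w) R"
    by (rule primeidealI[OF ann_ideal[OF I w(1)] is_cring nc pr])
  thus ?thesis using w by blast
qed

lemma zd_in_ass:
  assumes N: "noetherian_ring R" and J: "ideal J R" and a: "a \<in> carrier R"
    and b: "b \<in> carrier R" "b \<notin> J" "a \<otimes> b \<in> J"
  shows "\<exists>P\<in>Ass R J. a \<in> P"
proof -
  obtain w where "w \<in> carrier R - J" "ann R J b \<subseteq> ann R J w" "primeideal (ann R J w) R"
    using max_ann[OF N J b(1,2)] by blast
  moreover have "a \<in> ann R J b" using a b unfolding ann_def by auto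
  ultimately show ?thesis unfolding Ass_def by blast
qed

end


context cring
begin

lemma ann_mem: "t \<in> ann R I w \<longleftrightarrow> t \<in> carrier R \<and> t \<otimes> w \<in> I" unfolding ann_def by simp

lemma ass_finite:
  assumes N: "noetherian_ring R" and J: "ideal J R"
  shows "finite (Ass R J)"
proof -
  define good where "good I \<longleftrightarrow> ideal I R \<and> J \<subseteq> I \<and>
     (\<exists>S. finite S \<and> (\<forall>w \<in> I - J. primeideal (ann R J w) R \<longrightarrow> ann R J w \<in> S))" for I
  define F where "F = {I. good I}"
  have JF: "J \<in> F" unfolding F_def good_def using J by (intro CollectI conjI exI[of _ "{}"]) auto
  have FI: "\<forall>I\<in>F. ideal I R" unfolding F_def good_def by auto
  have FN: "F \<noteq> {}" using JF by blast
  obtain I0 where I0: "I0 \<in> F" "\<forall>Y\<in>F. I0 \<subseteq> Y \<longrightarrow> Y = I0"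
    using noeth_max[OF N FN FI] by (elim bexE)
  have gI0: "good I0" using I0(1) unfolding F_def by simp
  hence I0i: "ideal I0 R" "J \<subseteq> I0" unfolding good_def by auto
  have "\<exists>S. finite S \<and> (\<forall>w \<in> I0 - J. primeideal (ann R J w) R \<longrightarrow> ann R J w \<in> S)"
    using gI0 unfolding good_def by (elim conjE)
  then obtain S where S0: "finite S \<and> (\<forall>w \<in> I0 - J. primeideal (ann R J w) R \<longrightarrow> ann R J w \<in> S)"
    by (elim exE)
  hence S: "finite S" "\<forall>w \<in> I0 - J. primeideal (ann R J w) R \<longrightarrow> ann R J w \<in> S" by simp_all
  have Ic: "I0 = carrier R"
  proof (rule ccontr)
    assume ne: "I0 \<noteq> carrier R"
    have "\<one> \<notin> I0" using ne ideal.one_imp_carrier[OF I0i(1)] by auto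
    then obtain w0 where w0: "w0 \<in> carrier R" "w0 \<notin> I0" and P0: "primeideal (ann R I0 w0) R"
      using max_ann[OF N I0i(1), of \<one>] by auto
    define I' where "I' = plusI R I0 w0"
    have I'i: "ideal I' R" unfolding I'_def using plusI_ideal[OF I0i(1) w0(1)] .
    have sub: "I0 \<subseteq> I'" unfolding I'_def using plusI_sub[OF I0i(1) w0(1)] .
    have w0I': "w0 \<in> I'" unfolding I'_def using plusI_gen[OF I0i(1) w0(1)] .
    have key: "ann R J w \<in> insert (ann R I0 w0) S"
      if w: "w \<in> I'" "w \<notin> J" and P: "primeideal (ann R J w) R" for w
    proof (cases "w \<in> I0")
      case True
      hence "w \<in> I0 - J" using w by simp
      thus ?thesis using S(2) P by simp
    next
      case False
      have wc: "w \<in> carrier R" using ideal.Icarr[OF I'i w(1)] .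
      obtain i r where ir: "i \<in> I0" "r \<in> carrier R" "w = i \<oplus> r \<otimes> w0"
        using w(1) unfolding I'_def plusI_def by blast
      have ic: "i \<in> carrier R" using ideal.Icarr[OF I0i(1) ir(1)] .
      have rP0: "r \<notin> ann R I0 w0"
      proof
        assume "r \<in> ann R I0 w0"
        hence "r \<otimes> w0 \<in> I0" unfolding ann_def by auto
        hence "w \<in> I0" using ir ideal.I_l_closed additive_subgroup.a_closed[OF ideal.axioms(1)[OF I0i(1)]] by simp
        thus False using False by simp
      qed
      show ?thesis
      proof (cases "\<exists>s\<in>carrier R. s \<otimes> w \<in> I0 \<and> s \<otimes> w \<notin> J")
        case True
        then obtain s where s: "s \<in> carrier R" "s \<otimes> w \<in> I0" "s \<otimes> w \<notin> J" by blast
        have sP: "s \<notin> ann R J w" using s unfolding ann_def by auto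
        have "ann R J (s \<otimes> w) = ann R J w"
        proof (rule Set.set_eqI)
          fix t
          show "t \<in> ann R J (s \<otimes> w) \<longleftrightarrow> t \<in> ann R J w"
          proof (cases "t \<in> carrier R")
            case tc: True
            have e: "t \<otimes> (s \<otimes> w) = (t \<otimes> s) \<otimes> w" using tc s wc by algebra
            have "t \<in> ann R J (s \<otimes> w) \<longleftrightarrow> t \<otimes> s \<in> ann R J w"
              using e tc s unfolding ann_def by auto
            also have "\<dots> \<longleftrightarrow> t \<in> ann R J w"
            proof
              assume "t \<otimes> s \<in> ann R J w"
              thus "t \<in> ann R J w" using primeideal.I_prime[OF P tc s(1)] sP by blast
            next
              assume "t \<in> ann R J w"
              thus "t \<otimes> s \<in> ann R J w" using ideal.I_r_closed[OF primeideal.axioms(1)[OF P]] s by blast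
            qed
            finally show ?thesis .
          qed (auto simp: ann_def)
        qed
        moreover have "s \<otimes> w \<in> I0 - J" using s by blast
        ultimately have "ann R J (s \<otimes> w) \<in> S" using S(2) P by metis
        thus ?thesis using \<open>ann R J (s \<otimes> w) = ann R J w\<close> by simp
      next
        case B: False
        have "ann R J w = ann R I0 w0"
        proof (rule Set.set_eqI)
          fix t
          show "t \<in> ann R J w \<longleftrightarrow> t \<in> ann R I0 w0"
          proof (cases "t \<in> carrier R")
            case tc: True
            have e: "t \<otimes> w = t \<otimes> i \<oplus> (t \<otimes> r) \<otimes> w0" using tc ic ir w0 by (simp only: ir(3)) algebra
            have ti: "t \<otimes> i \<in> I0" using ideal.I_l_closed[OF I0i(1) ir(1) tc] .
            have "t \<in> ann R J w \<longleftrightarrow> t \<otimes> w \<in> I0"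
              using B tc wc I0i(2) unfolding ann_def by auto
            also have "\<dots> \<longleftrightarrow> (t \<otimes> r) \<otimes> w0 \<in> I0"
              using e ideal_add_iff[OF I0i(1) ti] tc ir w0 by simp
            also have "\<dots> \<longleftrightarrow> t \<otimes> r \<in> ann R I0 w0" using tc ir unfolding ann_def by simp
            also have "\<dots> \<longleftrightarrow> t \<in> ann R I0 w0"
            proof
              assume "t \<otimes> r \<in> ann R I0 w0"
              thus "t \<in> ann R I0 w0" using primeideal.I_prime[OF P0 tc ir(2)] rP0 by blast
            next
              assume "t \<in> ann R I0 w0"
              thus "t \<otimes> r \<in> ann R I0 w0" using ideal.I_r_closed[OF primeideal.axioms(1)[OF P0]] ir by blast
            qed
            finally show ?thesis .
          qed (auto simp: ann_def)
        qed
        thus ?thesis by simp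
      qed
    qed
    have "good I'" unfolding good_def using I'i sub I0i(2) S(1) key
      by (intro conjI exI[of _ "insert (ann R I0 w0) S"]) auto
    hence "I' = I0" using I0(2) sub unfolding F_def by auto
    thus False using w0 w0I' by simp
  qed
  have "Ass R J \<subseteq> S"
    using S(2) Ic unfolding Ass_def by auto
  thus ?thesis using S(1) finite_subset by blast
qed

end


context cring
begin

lemma avoid_prod:
  assumes "finite S" "\<forall>Q\<in>S. ideal Q R \<and> \<not> Q \<subseteq> P" "primeideal P R"
  shows "\<exists>c\<in>carrier R. c \<notin> P \<and> (\<forall>Q\<in>S. c \<in> Q)"
  using assms
proof (induction S rule: finite_induct)
  case empty
  have "\<one> \<notin> P"
  proof
    assume "\<one> \<in> P"
    hence "P = carrier R" using ideal.one_imp_carrier[OF primeideal.axioms(1)[OF empty.prems(2)]] by simp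
    thus False using primeideal.I_notcarr[OF empty.prems(2)] by simp
  qed
  thus ?case by auto
next
  case (insert Q0 S)
  obtain c where c: "c \<in> carrier R" "c \<notin> P" "\<forall>Q\<in>S. c \<in> Q" using insert by auto
  have Q0: "ideal Q0 R" "\<not> Q0 \<subseteq> P" using insert.prems by auto
  then obtain q where q: "q \<in> Q0" "q \<notin> P" by blast
  have qc: "q \<in> carrier R" using ideal.Icarr[OF Q0(1) q(1)] .
  have "c \<otimes> q \<notin> P" using primeideal.I_prime[OF insert.prems(2) c(1) qc] c(2) q(2) by auto
  moreover have "c \<otimes> q \<in> Q0" using ideal.I_l_closed[OF Q0(1) q(1) c(1)] .
  moreover have "\<forall>Q\<in>S. c \<otimes> q \<in> Q"
  proof
    fix Q assume "Q \<in> S"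
    hence "ideal Q R" "c \<in> Q" using insert.prems c by auto
    thus "c \<otimes> q \<in> Q" using ideal.I_r_closed[OF _ _ qc] by auto
  qed
  ultimately show ?case using c qc by auto
qed

lemma avoid_incomp:
  assumes "finite S" "\<forall>P\<in>S. primeideal P R" "\<forall>P\<in>S. \<forall>P'\<in>S. P \<subseteq> P' \<longrightarrow> P = P'"
    "ideal I R" "\<forall>P\<in>S. \<not> I \<subseteq> P"
  shows "\<exists>x\<in>I. \<forall>P\<in>S. x \<notin> P"
  using assms
proof (induction S rule: finite_induct)
  case empty
  thus ?case using additive_subgroup.zero_closed[OF ideal.axioms(1)[OF assms(4)]] by blast
next
  case (insert P S)
  obtain x where x: "x \<in> I" "\<forall>Q\<in>S. x \<notin> Q" using insert by auto
  have PP: "primeideal P R" using insert.prems by auto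
  have Pi: "ideal P R" using primeideal.axioms(1)[OF PP] .
  have xc: "x \<in> carrier R" using ideal.Icarr[OF assms(4) x(1)] .
  show ?case
  proof (cases "x \<in> P")
    case False thus ?thesis using x by auto
  next
    case True
    obtain y where y: "y \<in> I" "y \<notin> P" using insert.prems by auto
    have yc: "y \<in> carrier R" using ideal.Icarr[OF assms(4) y(1)] .
    have "\<forall>Q\<in>S. ideal Q R \<and> \<not> Q \<subseteq> P"
    proof
      fix Q assume Q: "Q \<in> S"
      hence "Q \<noteq> P" using insert.hyps by auto
      hence "\<not> Q \<subseteq> P" using insert.prems(2) Q by auto
      moreover have "ideal Q R" using insert.prems(1) Q primeideal.axioms(1) by blast
      ultimately show "ideal Q R \<and> \<not> Q \<subseteq> P" by simp
    qed
    then obtain c where c: "c \<in> carrier R" "c \<notin> P" "\<forall>Q\<in>S. c \<in> Q"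
      using avoid_prod[OF insert.hyps(1) _ PP] by blast
    define z where "z = x \<oplus> y \<otimes> c"
    have ycc: "y \<otimes> c \<in> carrier R" using yc c by simp
    have "z \<in> I" unfolding z_def
      using additive_subgroup.a_closed[OF ideal.axioms(1)[OF assms(4)] x(1) ideal.I_r_closed[OF assms(4) y(1) c(1)]] .
    moreover have "z \<notin> P"
    proof
      assume "z \<in> P"
      hence "y \<otimes> c \<in> P" unfolding z_def using ideal_add_iff[OF Pi True ycc] by simp
      thus False using primeideal.I_prime[OF PP yc c(1)] y(2) c(2) by auto
    qed
    moreover have "\<forall>Q\<in>S. z \<notin> Q"
    proof (intro ballI notI)
      fix Q assume Q: "Q \<in> S" "z \<in> Q"
      have Qi: "ideal Q R" using insert.prems(1) Q primeideal.axioms(1) by blast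
      have "c \<in> Q" using c(3) Q(1) by auto
      hence yQ: "y \<otimes> c \<in> Q" using ideal.I_l_closed[OF Qi _ yc] by auto
      have "z = y \<otimes> c \<oplus> x" unfolding z_def using xc ycc by (simp add: a_comm)
      hence "x \<in> Q" using Q ideal_add_iff[OF Qi yQ xc] by simp
      thus False using x Q by auto
    qed
    ultimately show ?thesis by blast
  qed
qed

lemma avoid:
  assumes "finite S" "\<forall>P\<in>S. primeideal P R" "ideal I R" "\<forall>P\<in>S. \<not> I \<subseteq> P"
  shows "\<exists>x\<in>I. \<forall>P\<in>S. x \<notin> P"
proof -
  define S' where "S' = {P\<in>S. \<forall>P'\<in>S. P \<subseteq> P' \<longrightarrow> P = P'}"
  have fin: "finite S'" using assms(1) unfolding S'_def by simp
  have inc: "\<forall>P\<in>S'. \<forall>P'\<in>S'. P \<subseteq> P' \<longrightarrow> P = P'" unfolding S'_def by auto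
  obtain x where x: "x \<in> I" "\<forall>P\<in>S'. x \<notin> P"
    using avoid_incomp[OF fin _ inc assms(3)] assms unfolding S'_def by auto
  have "\<forall>P\<in>S. x \<notin> P"
  proof
    fix P assume P: "P \<in> S"
    obtain P' where P': "P' \<in> S" "P \<subseteq> P'" "\<forall>b\<in>S. P' \<subseteq> b \<longrightarrow> P' = b"
      using finite_has_maximal2[OF assms(1) P] by auto
    hence "P' \<in> S'" unfolding S'_def by auto
    thus "x \<notin> P" using x P' by auto
  qed
  thus ?thesis using x by auto
qed

lemma exists_reg:
  assumes N: "noetherian_ring R" and fin: "finite JJ" and id: "\<forall>J\<in>JJ. ideal J R"
    and ns: "\<forall>J\<in>JJ. \<not> soc R J m" and m: "ideal m R"
  shows "\<exists>a\<in>m. \<forall>J\<in>JJ. regm R J a"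
proof -
  define S where "S = (\<Union>J\<in>JJ. Ass R J)"
  have "finite S" unfolding S_def using fin id ass_finite[OF N] by auto
  moreover have "\<forall>P\<in>S. primeideal P R" unfolding S_def Ass_def by auto
  moreover have "\<forall>P\<in>S. \<not> m \<subseteq> P"
  proof (intro ballI notI)
    fix P assume "P \<in> S" "m \<subseteq> P"
    then obtain J w where J: "J \<in> JJ" "w \<in> carrier R" "w \<notin> J" "P = ann R J w"
      unfolding S_def Ass_def by auto
    hence "soc R J m" using \<open>m \<subseteq> P\<close> unfolding soc_def ann_def by blast
    thus False using ns J by auto
  qed
  ultimately obtain a where a: "a \<in> m" "\<forall>P\<in>S. a \<notin> P" using avoid[OF _ _ m] by blast
  have ac: "a \<in> carrier R" using ideal.Icarr[OF m a(1)] .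
  have "\<forall>J\<in>JJ. regm R J a"
  proof (intro ballI)
    fix J assume J: "J \<in> JJ"
    show "regm R J a" unfolding regm_def
    proof (intro ballI impI)
      fix r assume r: "r \<in> carrier R" "a \<otimes> r \<in> J"
      show "r \<in> J"
      proof (rule ccontr)
        assume "r \<notin> J"
        then obtain P where "P \<in> Ass R J" "a \<in> P" using zd_in_ass[OF N _ ac r(1) _ r(2)] id J by blast
        thus False using a J unfolding S_def by auto
      qed
    qed
  qed
  thus ?thesis using a by auto
qed

end


context cring
begin

lemma soc_transfer:
  assumes I: "ideal I R" and a: "a \<in> carrier R" and b: "b \<in> carrier R" and M: "M \<subseteq> carrier R"
    and bM: "b \<in> M" and ra: "regm R I a" and rb: "regm R I b" and s: "soc R (plusI R I a) M"
  shows "soc R (plusI R I b) M"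
proof -
  have Ic: "I \<subseteq> carrier R" using ideal.Icarr[OF I] by blast
  obtain w where w: "w \<in> carrier R" "w \<notin> plusI R I a" "\<forall>t\<in>M. t \<otimes> w \<in> plusI R I a"
    using s unfolding soc_def by blast
  have "b \<otimes> w \<in> plusI R I a" using w bM by blast
  then obtain i u where iu: "i \<in> I" "u \<in> carrier R" "b \<otimes> w = i \<oplus> u \<otimes> a"
    unfolding plusI_def by blast
  have ic: "i \<in> carrier R" using iu Ic by blast
  have A: "t \<otimes> u \<in> plusI R I b" if t: "t \<in> M" for t
  proof -
    have tc: "t \<in> carrier R" using t M by blast
    have "t \<otimes> w \<in> plusI R I a" using w t by blast
    then obtain i' s where is': "i' \<in> I" "s \<in> carrier R" "t \<otimes> w = i' \<oplus> s \<otimes> a"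
      unfolding plusI_def by blast
    have i'c: "i' \<in> carrier R" using is' Ic by blast
    have e: "a \<otimes> (b \<otimes> s \<ominus> t \<otimes> u) = t \<otimes> i \<ominus> b \<otimes> i'"
    proof -
      have "a \<otimes> (b \<otimes> s \<ominus> t \<otimes> u) = b \<otimes> (s \<otimes> a) \<ominus> t \<otimes> (u \<otimes> a)"
        using a b tc iu is' by algebra
      also have "s \<otimes> a = t \<otimes> w \<ominus> i'" using is' i'c a tc w by (simp add: is'(3)) algebra
      also have "u \<otimes> a = b \<otimes> w \<ominus> i" using iu ic a b w by (simp add: iu(3)) algebra
      also have "b \<otimes> (t \<otimes> w \<ominus> i') \<ominus> t \<otimes> (b \<otimes> w \<ominus> i) = t \<otimes> i \<ominus> b \<otimes> i'"
        using b tc w ic i'c by algebra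
      finally show ?thesis .
    qed
    have "t \<otimes> i \<ominus> b \<otimes> i' \<in> I"
    proof -
      have "t \<otimes> i \<in> I" using ideal.I_l_closed[OF I iu(1) tc] .
      moreover have "b \<otimes> i' \<in> I" using ideal.I_l_closed[OF I is'(1) b] .
      ultimately show ?thesis unfolding a_minus_def
        using additive_subgroup.a_closed[OF ideal.axioms(1)[OF I]] additive_subgroup.a_inv_closed[OF ideal.axioms(1)[OF I]]
        by blast
    qed
    hence d: "b \<otimes> s \<ominus> t \<otimes> u \<in> I" using ra e b tc iu is' unfolding regm_def by simp
    hence nd: "\<ominus> (b \<otimes> s \<ominus> t \<otimes> u) \<in> I" using additive_subgroup.a_inv_closed[OF ideal.axioms(1)[OF I]] by blast
    have "t \<otimes> u = \<ominus> (b \<otimes> s \<ominus> t \<otimes> u) \<oplus> s \<otimes> b" using b tc iu is' by algebra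
    thus ?thesis using nd is'(2) unfolding plusI_def by blast
  qed
  have B: "u \<notin> plusI R I b"
  proof
    assume "u \<in> plusI R I b"
    then obtain i'' v where iv: "i'' \<in> I" "v \<in> carrier R" "u = i'' \<oplus> v \<otimes> b"
      unfolding plusI_def by blast
    have i''c: "i'' \<in> carrier R" using iv Ic by blast
    have e: "b \<otimes> (w \<ominus> v \<otimes> a) = i \<oplus> a \<otimes> i''"
    proof -
      have "b \<otimes> (w \<ominus> v \<otimes> a) = b \<otimes> w \<ominus> b \<otimes> (v \<otimes> a)" using b w iv a by algebra
      also have "b \<otimes> w = i \<oplus> (i'' \<oplus> v \<otimes> b) \<otimes> a" using iu iv by simp
      also have "i \<oplus> (i'' \<oplus> v \<otimes> b) \<otimes> a \<ominus> b \<otimes> (v \<otimes> a) = i \<oplus> a \<otimes> i''"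
        using ic i''c iv a b by algebra
      finally show ?thesis .
    qed
    have "i \<oplus> a \<otimes> i'' \<in> I"
      using additive_subgroup.a_closed[OF ideal.axioms(1)[OF I] iu(1) ideal.I_l_closed[OF I iv(1) a]] .
    hence "w \<ominus> v \<otimes> a \<in> I" using rb e w iv a unfolding regm_def by simp
    moreover have "w = (w \<ominus> v \<otimes> a) \<oplus> v \<otimes> a" using w iv a by algebra
    ultimately have "w \<in> plusI R I a" using iv(2) unfolding plusI_def by blast
    thus False using w by simp
  qed
  show ?thesis unfolding soc_def using A B iu(2) by blast
qed

lemma regm_swap:
  assumes f: "f \<in> carrier R" and h: "h \<in> carrier R"
    and rf: "regm R {\<zero>} f" and rhf: "regm R (PIdl f) h"
  shows "regm R (PIdl h) f"
  unfolding regm_def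
proof (intro ballI impI)
  fix r assume r: "r \<in> carrier R" "f \<otimes> r \<in> PIdl h"
  then obtain c where c: "c \<in> carrier R" "f \<otimes> r = c \<otimes> h" unfolding cgenideal_def by blast
  have "h \<otimes> c = r \<otimes> f" using c r f h by (simp add: m_comm)
  hence "h \<otimes> c \<in> PIdl f" using r unfolding cgenideal_def by blast
  hence "c \<in> PIdl f" using rhf c unfolding regm_def by blast
  then obtain d where d: "d \<in> carrier R" "c = d \<otimes> f" unfolding cgenideal_def by blast
  have "f \<otimes> (r \<ominus> d \<otimes> h) = f \<otimes> r \<ominus> (d \<otimes> f) \<otimes> h" using f r d h by algebra
  also have "\<dots> = \<zero>" using c d h by simp
  finally have "r \<ominus> d \<otimes> h \<in> {\<zero>}" using rf r d h unfolding regm_def by simp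
  hence z: "r \<ominus> d \<otimes> h = \<zero>" by simp
  have "r = (r \<ominus> d \<otimes> h) \<oplus> d \<otimes> h" using r d h by algebra
  hence "r = d \<otimes> h" using z d h by simp
  thus "r \<in> PIdl h" using d unfolding cgenideal_def by blast
qed

end


context cring
begin

lemma plusI_zero: assumes "x \<in> carrier R" shows "plusI R {\<zero>} x = PIdl x"
  unfolding plusI_def cgenideal_def using assms by (auto, metis l_zero m_closed)

lemma plusI_comm: assumes "x \<in> carrier R" "y \<in> carrier R"
  shows "plusI R (PIdl x) y = plusI R (PIdl y) x"
proof -
  have "plusI R (PIdl x) y = Idl (insert y {x})"
    using plusI_Idl[OF cgenideal_ideal[OF assms(1)] assms(2) _ cgenideal_eq_genideal[OF assms(1)]] assms by auto
  moreover have "plusI R (PIdl y) x = Idl (insert x {y})"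
    using plusI_Idl[OF cgenideal_ideal[OF assms(2)] assms(1) _ cgenideal_eq_genideal[OF assms(2)]] assms by auto
  ultimately show ?thesis by (simp add: insert_commute)
qed

lemma core:
  assumes N: "noetherian_ring R" and m: "ideal m R" and f: "f \<in> carrier R" and g: "g \<in> carrier R"
    and rf: "regm R {\<zero>} f" and rfg: "regm R (PIdl f) g"
    and z: "z1 \<in> m" "z2 \<in> m" "z3 \<in> m"
    and r1: "regm R {\<zero>} z1" and r2: "regm R (PIdl z1) z2" and r3: "regm R (plusI R (PIdl z1) z2) z3"
  shows "\<exists>a\<in>m. regm R (plusI R (PIdl f) g) a"
proof -
  have mc: "m \<subseteq> carrier R" using ideal.Icarr[OF m] by blast
  have zc: "z1 \<in> carrier R" "z2 \<in> carrier R" "z3 \<in> carrier R" using z mc by auto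
  have ns0: "\<not> soc R {\<zero>} m"
  proof
    assume "soc R {\<zero>} m"
    then obtain w where "w \<in> carrier R" "w \<notin> {\<zero>}" "z1 \<otimes> w \<in> {\<zero>}" using z unfolding soc_def by blast
    thus False using r1 unfolding regm_def by blast
  qed
  have ns1: "\<not> soc R (PIdl z1) m"
  proof
    assume "soc R (PIdl z1) m"
    then obtain w where "w \<in> carrier R" "w \<notin> PIdl z1" "z2 \<otimes> w \<in> PIdl z1" using z unfolding soc_def by blast
    thus False using r2 unfolding regm_def by blast
  qed
  have ns2: "\<not> soc R (plusI R (PIdl z1) z2) m"
  proof
    assume "soc R (plusI R (PIdl z1) z2) m"
    then obtain w where "w \<in> carrier R" "w \<notin> plusI R (PIdl z1) z2" "z3 \<otimes> w \<in> plusI R (PIdl z1) z2"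
      using z unfolding soc_def by blast
    thus False using r3 unfolding regm_def by blast
  qed
  have nsf: "\<not> soc R (PIdl f) m"
  proof
    assume "soc R (PIdl f) m"
    hence "soc R (plusI R {\<zero>} f) m" using plusI_zero[OF f] by simp
    hence "soc R (plusI R {\<zero>} z1) m"
      using soc_transfer[OF zeroideal f zc(1) mc z(1) rf r1] by blast
    thus False using ns1 plusI_zero[OF zc(1)] by simp
  qed
  have fin3: "finite {{\<zero>}, PIdl f, PIdl z1}" by simp
  have id3: "\<forall>J\<in>{{\<zero>}, PIdl f, PIdl z1}. ideal J R"
    using zeroideal cgenideal_ideal[OF f] cgenideal_ideal[OF zc(1)] by auto
  have ns3: "\<forall>J\<in>{{\<zero>}, PIdl f, PIdl z1}. \<not> soc R J m" using ns0 nsf ns1 by auto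
  obtain h where h0: "h \<in> m" "\<forall>J\<in>{{\<zero>}, PIdl f, PIdl z1}. regm R J h"
    using exists_reg[OF N fin3 id3 ns3 m] by (elim bexE)
  have h: "h \<in> m" "regm R {\<zero>} h" "regm R (PIdl f) h" "regm R (PIdl z1) h"
    using h0 by auto
  have hc: "h \<in> carrier R" using h mc by auto
  have nsJ: "\<not> soc R (plusI R (PIdl f) g) m"
  proof
    assume "soc R (plusI R (PIdl f) g) m"
    hence "soc R (plusI R (PIdl f) h) m"
      using soc_transfer[OF cgenideal_ideal[OF f] g hc mc h(1) rfg h(3)] by blast
    hence s1: "soc R (plusI R (PIdl h) f) m" using plusI_comm[OF f hc] by simp
    have rhf: "regm R (PIdl h) f" using regm_swap[OF f hc rf h(3)] .
    have rhz: "regm R (PIdl h) z1" using regm_swap[OF zc(1) hc r1 h(4)] .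
    have "soc R (plusI R (PIdl h) z1) m"
      using soc_transfer[OF cgenideal_ideal[OF hc] f zc(1) mc z(1) rhf rhz s1] .
    hence "soc R (plusI R (PIdl z1) h) m" using plusI_comm[OF zc(1) hc] by simp
    hence "soc R (plusI R (PIdl z1) z2) m"
      using soc_transfer[OF cgenideal_ideal[OF zc(1)] hc zc(2) mc z(2) h(4) r2] by blast
    thus False using ns2 by simp
  qed
  have "\<exists>a\<in>m. \<forall>J\<in>{plusI R (PIdl f) g}. regm R J a"
    by (rule exists_reg[OF N _ _ _ m]) (use nsJ plusI_ideal[OF cgenideal_ideal[OF f] g] in auto)
  thus ?thesis by auto
qed

end


context cring
begin

lemma quot_carrier: assumes "ideal K R" "XX \<in> carrier (R Quot K)"
  obtains c where "c \<in> carrier R" "XX = K +> c"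
  using assms(2) unfolding FactRing_def A_RCOSETS_def'[of R K] by auto

lemma quot_mult: assumes "ideal K R" "x \<in> carrier R" "y \<in> carrier R"
  shows "(K +> x) \<otimes>\<^bsub>R Quot K\<^esub> (K +> y) = K +> (x \<otimes> y)"
  using ring_hom_mult[OF ideal.rcos_ring_hom[OF assms(1)] assms(2,3)] by simp

lemma quot_one: "\<one>\<^bsub>R Quot K\<^esub> = K +> \<one>" unfolding FactRing_def by simp

lemma quot_in_carrier: assumes "ideal K R" "x \<in> carrier R" shows "K +> x \<in> carrier (R Quot K)"
  using ring_hom_closed[OF ideal.rcos_ring_hom[OF assms(1)] assms(2)] .

lemma coset_self: assumes "ideal K R" "x \<in> carrier R" shows "x \<in> K +> x"
proof -
  have "\<zero> \<in> K" using additive_subgroup.zero_closed[OF ideal.axioms(1)[OF assms(1)]] .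
  moreover have "x = \<zero> \<oplus> x" using assms(2) by simp
  ultimately show ?thesis unfolding a_r_coset_def'[of R K x] by blast
qed

lemma quot_idl:
  assumes K: "ideal K R" and f: "f \<in> carrier R" and g: "g \<in> carrier R" and KJ: "K \<subseteq> Idl {f, g}"
  shows "Idl\<^bsub>R Quot K\<^esub> {K +> f, K +> g} = (+>) K ` (Idl {f, g})"
proof
  interpret A: ring "R Quot K" using ideal.quotient_is_ring[OF K] .
  have J: "ideal (Idl {f, g}) R" using genideal_ideal f g by auto
  have fg: "f \<in> Idl {f, g}" "g \<in> Idl {f, g}" using genideal_self[of "{f, g}"] f g by auto
  have gs: "{K +> f, K +> g} \<subseteq> (+>) K ` (Idl {f, g})" using fg by auto
  show "Idl\<^bsub>R Quot K\<^esub> {K +> f, K +> g} \<subseteq> (+>) K ` (Idl {f, g})"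
    using A.genideal_minimal[OF ring_ideal_imp_quot_ideal[OF K J] gs] .
  have sub: "{K +> f, K +> g} \<subseteq> carrier (R Quot K)" using quot_in_carrier[OF K] f g by auto
  have Ai: "ideal (Idl\<^bsub>R Quot K\<^esub> {K +> f, K +> g}) (R Quot K)" using A.genideal_ideal[OF sub] .
  have V: "ideal {r \<in> carrier R. K +> r \<in> Idl\<^bsub>R Quot K\<^esub> {K +> f, K +> g}} R"
    using ring_hom_ring.ideal_vimage[OF ideal.rcos_ring_hom_ring[OF K] Ai] .
  have "{f, g} \<subseteq> {r \<in> carrier R. K +> r \<in> Idl\<^bsub>R Quot K\<^esub> {K +> f, K +> g}}"
    using A.genideal_self[OF sub] f g by auto
  hence "Idl {f, g} \<subseteq> {r \<in> carrier R. K +> r \<in> Idl\<^bsub>R Quot K\<^esub> {K +> f, K +> g}}"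
    using genideal_minimal[OF V] by blast
  thus "(+>) K ` (Idl {f, g}) \<subseteq> Idl\<^bsub>R Quot K\<^esub> {K +> f, K +> g}" by blast
qed

lemma quot_mem:
  assumes K: "ideal K R" and J: "ideal J R" and KJ: "K \<subseteq> J" and c: "c \<in> carrier R"
  shows "(K +> c \<in> (+>) K ` J) = (c \<in> J)"
proof
  assume "K +> c \<in> (+>) K ` J"
  then obtain j where j: "j \<in> J" "K +> c = K +> j" by blast
  have "c \<in> K +> j" using coset_self[OF K c] j by simp
  then obtain k where "k \<in> K" "c = k \<oplus> j" unfolding a_r_coset_def'[of R K j] by blast
  thus "c \<in> J" using additive_subgroup.a_closed[OF ideal.axioms(1)[OF J]] KJ j by blast
qed auto

lemma nonunit_in_max:
  assumes N: "noetherian_ring R" and x: "x \<in> carrier R" "x \<notin> Units R" and U: "\<exists>!m. maximalideal m R"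
  shows "x \<in> (THE m. maximalideal m R)"
proof -
  have P: "ideal (PIdl x) R" using cgenideal_ideal[OF x(1)] .
  have Pne: "PIdl x \<noteq> carrier R"
  proof
    assume "PIdl x = carrier R"
    hence "\<one> \<in> PIdl x" by simp
    then obtain y where y: "y \<in> carrier R" "\<one> = y \<otimes> x" unfolding cgenideal_def by blast
    hence "y \<otimes> x = \<one>" "x \<otimes> y = \<one>" using x(1) by (auto simp: m_comm)
    hence "x \<in> Units R" using x(1) y(1) unfolding Units_def by blast
    thus False using x by simp
  qed
  define F where "F = {I. ideal I R \<and> PIdl x \<subseteq> I \<and> I \<noteq> carrier R}"
  have F1: "F \<noteq> {}" using P Pne unfolding F_def by blast
  have F2: "\<forall>I\<in>F. ideal I R" unfolding F_def by auto
  obtain M where M: "M \<in> F" "\<forall>Y\<in>F. M \<subseteq> Y \<longrightarrow> Y = M"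
    using noeth_max[OF N F1 F2] by (elim bexE)
  have "maximalideal M R"
  proof (rule maximalidealI)
    show "ideal M R" "carrier R \<noteq> M" using M unfolding F_def by auto
    fix J assume J: "ideal J R" "M \<subseteq> J" "J \<subseteq> carrier R"
    show "J = M \<or> J = carrier R"
    proof (cases "J = carrier R")
      case False
      hence "J \<in> F" using J M(1) unfolding F_def by auto
      thus ?thesis using M J by auto
    qed simp
  qed
  hence "(THE m. maximalideal m R) = M" using U by (simp add: the1_equality)
  moreover have "x \<in> M" using M cgenideal_self[OF x(1)] unfolding F_def by auto
  ultimately show ?thesis by simp
qed

end


theorem lemma2p6:
  fixes Q :: "('a, 'b) ring_scheme" (structure)
    and f g :: 'a
  assumes "local_ring Q" and "noetherian_ring Q"
    and "regular_on_quot Q {\<zero>} f" and "regular_on_quot Q {\<zero>} g"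
    and "PIdl f \<inter> PIdl g = PIdl (f \<otimes> g)"
    and "depth Q > 2"
  shows "\<exists>a \<in> carrier (Q Quot PIdl (f \<otimes> g)).
           regular_on_quot (Q Quot PIdl (f \<otimes> g))
             (Idl\<^bsub>Q Quot PIdl (f \<otimes> g)\<^esub> {PIdl (f \<otimes> g) +> f, PIdl (f \<otimes> g) +> g}) a"
proof -
  have cr: "cring Q" and U: "\<exists>!m. maximalideal m Q" using assms(1) unfolding local_ring_def by auto
  interpret cring Q by (rule cr)
  note N = assms(2)
  define m where "m = max_ideal Q"
  have mmax: "maximalideal m Q" unfolding m_def max_ideal_def using theI'[OF U] .
  have mi: "ideal m Q" using maximalideal.axioms(1)[OF mmax] .
  have mnc: "carrier Q \<noteq> m" using maximalideal.I_notcarr[OF mmax] .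
  have mc: "m \<subseteq> carrier Q" using ideal.Icarr[OF mi] by blast
  have f: "f \<in> carrier Q" "f \<notin> Units Q" and rf: "regm Q {\<zero>} f"
    using assms(3) unfolding regular_on_quot_def regm_def by auto
  have g: "g \<in> carrier Q" "g \<notin> Units Q" and rg: "regm Q {\<zero>} g"
    using assms(4) unfolding regular_on_quot_def regm_def by auto
  have fm: "f \<in> m" using nonunit_in_max[OF N f U] unfolding m_def max_ideal_def .
  have rfg: "regm Q (PIdl f) g" unfolding regm_def
  proof (intro ballI impI)
    fix r assume r: "r \<in> carrier Q" "g \<otimes> r \<in> PIdl f"
    have e: "g \<otimes> r = r \<otimes> g" using r g by (simp add: m_comm)
    have "r \<otimes> g \<in> PIdl g" using r(1) unfolding cgenideal_def by blast
    hence "g \<otimes> r \<in> PIdl g" using e by simp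
    hence "g \<otimes> r \<in> PIdl (f \<otimes> g)" using r assms(5) by blast
    then obtain k where k: "k \<in> carrier Q" "g \<otimes> r = k \<otimes> (f \<otimes> g)" unfolding cgenideal_def by blast
    have "g \<otimes> (r \<ominus> k \<otimes> f) = g \<otimes> r \<ominus> k \<otimes> (f \<otimes> g)" using g r k f by algebra
    also have "\<dots> = \<zero>" using k f g by simp
    finally have "r \<ominus> k \<otimes> f \<in> {\<zero>}" using rg r k f unfolding regm_def by simp
    hence z: "r \<ominus> k \<otimes> f = \<zero>" by simp
    have "r = (r \<ominus> k \<otimes> f) \<oplus> k \<otimes> f" using r k f by algebra
    hence "r = k \<otimes> f" using z k f by simp
    thus "r \<in> PIdl f" using k unfolding cgenideal_def by blast
  qed
  obtain xs where xs: "regular_sequence Q m xs" "2 < enat (length xs)"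
    using assms(6) unfolding depth_def m_def less_Sup_iff by blast
  have "3 \<le> length xs" using xs(2) by (simp add: enat_ord_simps)
  then obtain z1 z2 z3 rest where xse: "xs = z1 # z2 # z3 # rest"
    by (auto simp: Suc_le_length_iff numeral_3_eq_3)
  have zm: "z1 \<in> m" "z2 \<in> m" "z3 \<in> m" using xs(1) xse unfolding regular_sequence_def by auto
  have zc: "z1 \<in> carrier Q" "z2 \<in> carrier Q" "z3 \<in> carrier Q" using zm mc by auto
  have RS: "\<forall>i<length xs. \<forall>b\<in>carrier Q. xs ! i \<otimes> b \<in> Idl (set (take i xs)) \<longrightarrow> b \<in> Idl (set (take i xs))"
    using xs(1) unfolding regular_sequence_def by blast
  have Idl0: "Idl {} = {\<zero>}"
  proof
    show "Idl {} \<subseteq> {\<zero>}" using genideal_minimal[OF zeroideal] by blast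
    show "{\<zero>} \<subseteq> Idl {}" using additive_subgroup.zero_closed[OF ideal.axioms(1)[OF genideal_ideal[of "{}"]]] by auto
  qed
  have "\<forall>b\<in>carrier Q. z1 \<otimes> b \<in> Idl {} \<longrightarrow> b \<in> Idl {}" using RS[rule_format, of 0] xse by auto
  hence r1: "regm Q {\<zero>} z1" unfolding regm_def Idl0 by blast
  have "\<forall>b\<in>carrier Q. z2 \<otimes> b \<in> Idl {z1} \<longrightarrow> b \<in> Idl {z1}" using RS[rule_format, of 1] xse by auto
  hence r2: "regm Q (PIdl z1) z2" unfolding regm_def using cgenideal_eq_genideal[OF zc(1)] by simp
  have "\<forall>b\<in>carrier Q. z3 \<otimes> b \<in> Idl {z1, z2} \<longrightarrow> b \<in> Idl {z1, z2}" using RS[rule_format, of 2] xse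
    by (auto simp: numeral_2_eq_2)
  moreover have "plusI Q (PIdl z1) z2 = Idl {z1, z2}"
    using plusI_Idl[OF cgenideal_ideal[OF zc(1)] zc(2) _ cgenideal_eq_genideal[OF zc(1)]] zc
    by (auto simp: insert_commute)
  ultimately have r3: "regm Q (plusI Q (PIdl z1) z2) z3" unfolding regm_def by simp
  obtain a where a: "a \<in> m" "regm Q (plusI Q (PIdl f) g) a"
    using core[OF N mi f(1) g(1) rf rfg zm r1 r2 r3] by (elim bexE)
  have Jeq: "plusI Q (PIdl f) g = Idl {f, g}"
    using plusI_Idl[OF cgenideal_ideal[OF f(1)] g(1) _ cgenideal_eq_genideal[OF f(1)]] f g
    by (auto simp: insert_commute)
  define J where "J = Idl {f, g}"
  define K where "K = PIdl (f \<otimes> g)"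
  have ra: "regm Q J a" using a(2) Jeq unfolding J_def by simp
  have ac: "a \<in> carrier Q" using a mc by auto
  have Ji: "ideal J Q" unfolding J_def using genideal_ideal f g by auto
  have fJ: "f \<in> J" unfolding J_def using genideal_self[of "{f, g}"] f g by auto
  have fgc: "f \<otimes> g \<in> carrier Q" using f g by simp
  have Ki: "ideal K Q" unfolding K_def using cgenideal_ideal[OF fgc] .
  have KJ: "K \<subseteq> J" unfolding K_def using cgenideal_minimal[OF Ji ideal.I_r_closed[OF Ji fJ g(1)]] .
  have Km: "K \<subseteq> m" unfolding K_def using cgenideal_minimal[OF mi ideal.I_r_closed[OF mi fm g(1)]] .
  have QI: "Idl\<^bsub>Q Quot K\<^esub> {K +> f, K +> g} = (+>) K ` J"
    unfolding J_def using quot_idl[OF Ki f(1) g(1)] KJ unfolding J_def by simp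
  have memI: "(K +> c \<in> Idl\<^bsub>Q Quot K\<^esub> {K +> f, K +> g}) = (c \<in> J)" if "c \<in> carrier Q" for c
    using quot_mem[OF Ki Ji KJ that] QI by simp
  have "regular_on_quot (Q Quot K) (Idl\<^bsub>Q Quot K\<^esub> {K +> f, K +> g}) (K +> a)"
    unfolding regular_on_quot_def
  proof (intro conjI ballI impI)
    show "K +> a \<in> carrier (Q Quot K)" using quot_in_carrier[OF Ki ac] .
    show "K +> a \<notin> Units (Q Quot K)"
    proof
      assume "K +> a \<in> Units (Q Quot K)"
      then obtain XX where XX: "XX \<in> carrier (Q Quot K)" "XX \<otimes>\<^bsub>Q Quot K\<^esub> (K +> a) = \<one>\<^bsub>Q Quot K\<^esub>"
        unfolding Units_def by blast
      then obtain b where b: "b \<in> carrier Q" "XX = K +> b" using quot_carrier[OF Ki] by blast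
      have "K +> (b \<otimes> a) = K +> \<one>" using XX b quot_mult[OF Ki b(1) ac] quot_one by simp
      hence "\<one> \<in> K +> (b \<otimes> a)" using coset_self[OF Ki one_closed] by simp
      then obtain k where k: "k \<in> K" "\<one> = k \<oplus> b \<otimes> a" unfolding a_r_coset_def'[of Q K] by blast
      have "b \<otimes> a \<in> m" using ideal.I_l_closed[OF mi a(1) b(1)] .
      hence "\<one> \<in> m" using k Km additive_subgroup.a_closed[OF ideal.axioms(1)[OF mi]] by auto
      thus False using ideal.one_imp_carrier[OF mi] mnc by auto
    qed
    fix XX assume XX: "XX \<in> carrier (Q Quot K)"
      "(K +> a) \<otimes>\<^bsub>Q Quot K\<^esub> XX \<in> Idl\<^bsub>Q Quot K\<^esub> {K +> f, K +> g}"
    then obtain b where b: "b \<in> carrier Q" "XX = K +> b" using quot_carrier[OF Ki] by blast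
    have "K +> (a \<otimes> b) \<in> Idl\<^bsub>Q Quot K\<^esub> {K +> f, K +> g}" using XX b quot_mult[OF Ki ac b(1)] by simp
    hence "a \<otimes> b \<in> J" using memI ac b by simp
    hence "b \<in> J" using ra b unfolding regm_def by blast
    thus "XX \<in> Idl\<^bsub>Q Quot K\<^esub> {K +> f, K +> g}" using memI b by simp
  qed
  moreover have "K +> a \<in> carrier (Q Quot K)" using quot_in_carrier[OF Ki ac] .
  ultimately show ?thesis unfolding K_def by blast
qed


end
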